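(* For every $n\in\mathbb N$, there is a unital complete order isomorphism between the operator system $C(S^1)^{(n)}$ of $n\times n$ complex Toeplitz matrices and the operator system dual $\left(C(S^1)_{(n)}\right)^d$; that is, $C(S^1)^{(n)}\simeq \left(C(S^1)_{(n)}\right)^d$.
   Context: $S^1\subset\mathbb C$ is the unit circle and $C(S^1)$ the C$^*$-algebra of continuous functions $S^1\to\mathbb C$; for $f\in C(S^1)$, $\hat f(k)=\frac{1}{2\pi}\int_0^{2\pi} f(e^{i\theta})e^{-ik\theta}d\theta$. $C(S^1)_{(n)}$ is the space of $f\in C(S^1)$ with $\hat f(k)=0$ for all $|k|\ge n$ (trigonometric polynomials $\sum_{k=-n+1}^{n-1}\alpha_kz^k$), an operator system whose matrix ordering is: $F\in M_p(C(S^1)_{(n)})$ is positive iff $F(z)$ is positive semidefinite for every $z\in S^1$; its Archimedean order unit is the constant function $1$. $C(S^1)^{(n)}$ is the operator subsystem of $M_n(\mathbb C)$ of Toeplitz matrices $[\tau_{k-\ell}]_{k,\ell=0}^{n-1}$, with matrix ordering inherited from $M_p(M_n(\mathbb C))$ and order unit the identity matrix. For a finite-dimensional operator system $\mathcal R$, its dual $\mathcal R^d$ is the space of linear functionals on $\mathcal R$ with involution $\varphi^*(r)=\overline{\varphi(r^* )}$ and matrix ordering: $[\varphi_{ij}]\in M_p(\mathcal R^d)$ is positive iff $r\mapsto[\varphi_{ij}(r)]$ is a completely positive map $\mathcal R\to M_p(\mathbb C)$. The dual $\left(C(S^1)_{(n)}\right)^d$ is made an operator system with Archimedean order unit the faithful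 state $f\mapsto\hat f(0)$. A unital complete order isomorphism is a linear bijection $\phi$ mapping order unit to order unit such that $\phi$ and $\phi^{-1}$ are completely positive. *)

theory Defs
  imports "HOL-Analysis.Analysis"
begin

text \<open>Matrices are represented as functions nat => nat => complex (entries outside
the index range are irrelevant / zero).  Functions on the unit circle are represented
as functions complex => complex that vanish off the unit circle.\<close>

definition psd :: "'i set \<Rightarrow> ('i \<Rightarrow> 'i \<Rightarrow> complex) \<Rightarrow> bool" where
  "psd I A \<longleftrightarrow> (\<forall>v::'i \<Rightarrow> complex.
      Im (\<Sum>a\<in>I. \<Sum>b\<in>I. cnj (v a) * A a b * v b) = 0 \<and>
      Re (\<Sum>a\<in>I. \<Sum>b\<in>I. cnj (v a) * A a b * v b) \<ge> 0)"

definition fourier_coeff :: "(complex \<Rightarrow> complex) \<Rightarrow> int \<Rightarrow> complex" where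
  "fourier_coeff f k = (1 / (2 * pi)) *
     integral {0..2*pi} (\<lambda>\<theta>. f (cis \<theta>) * cis (- (real_of_int k * \<theta>)))"

definition trigpoly :: "nat \<Rightarrow> (complex \<Rightarrow> complex) set" where
  "trigpoly n = {f. \<exists>\<alpha>::int \<Rightarrow> complex. \<forall>z. f z =
      (if cmod z = 1 then (\<Sum>k\<in>{-(int n - 1)..int n - 1}. \<alpha> k * z powi k) else 0)}"

definition pos_trig :: "nat \<Rightarrow> (nat \<Rightarrow> nat \<Rightarrow> (complex \<Rightarrow> complex)) \<Rightarrow> bool" where
  "pos_trig p F \<longleftrightarrow> (\<forall>z. cmod z = 1 \<longrightarrow> psd {..<p} (\<lambda>i j. F i j z))"

definition trig_dual :: "nat \<Rightarrow> ((complex \<Rightarrow> complex) \<Rightarrow> complex) set" where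
  "trig_dual n = {\<psi>. (\<forall>f\<in>trigpoly n. \<forall>g\<in>trigpoly n. \<forall>a b.
        \<psi> (\<lambda>z. a * f z + b * g z) = a * \<psi> f + b * \<psi> g) \<and>
      (\<forall>f. f \<notin> trigpoly n \<longrightarrow> \<psi> f = 0)}"

text \<open>Positivity in M_p((C(S^1)_(n))^d): the map r |-> [psi_ij(r)] is completely positive.\<close>
definition pos_dual :: "nat \<Rightarrow> nat \<Rightarrow> (nat \<Rightarrow> nat \<Rightarrow> ((complex \<Rightarrow> complex) \<Rightarrow> complex)) \<Rightarrow> bool" where
  "pos_dual n p \<Psi> \<longleftrightarrow> (\<forall>q G. (\<forall>k<q. \<forall>l<q. G k l \<in> trigpoly n) \<longrightarrow> pos_trig q G \<longrightarrow>
      psd ({..<p} \<times> {..<q}) (\<lambda>(i, k) (j, l). \<Psi> i j (G k l)))"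

text \<open>The faithful state f |-> f^(0), the order unit of the dual.\<close>
definition fourier_state :: "nat \<Rightarrow> (complex \<Rightarrow> complex) \<Rightarrow> complex" where
  "fourier_state n f = (if f \<in> trigpoly n then fourier_coeff f 0 else 0)"

definition toeplitz :: "nat \<Rightarrow> (nat \<Rightarrow> nat \<Rightarrow> complex) set" where
  "toeplitz n = {A. \<exists>\<tau>::int \<Rightarrow> complex. \<forall>k l.
      A k l = (if k < n \<and> l < n then \<tau> (int k - int l) else 0)}"

definition id_mat :: "nat \<Rightarrow> nat \<Rightarrow> nat \<Rightarrow> complex" where
  "id_mat n = (\<lambda>k l. if k = l \<and> k < n then 1 else 0)"

text \<open>Positivity in M_p(C(S^1)^(n)), inherited from M_p(M_n(C)) = M_{pn}(C).\<close>
definition pos_toep :: "nat \<Rightarrow> nat \<Rightarrow> (nat \<Rightarrow> nat \<Rightarrow> (nat \<Rightarrow> nat \<Rightarrow> complex)) \<Rightarrow> bool" where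
  "pos_toep n p X \<longleftrightarrow> psd ({..<p} \<times> {..<n}) (\<lambda>(i, k) (j, l). X i j k l)"

definition unital_coi :: "nat \<Rightarrow> ((nat \<Rightarrow> nat \<Rightarrow> complex) \<Rightarrow> ((complex \<Rightarrow> complex) \<Rightarrow> complex)) \<Rightarrow> bool" where
  "unital_coi n \<phi> \<longleftrightarrow>
     bij_betw \<phi> (toeplitz n) (trig_dual n) \<and>
     (\<forall>A\<in>toeplitz n. \<forall>B\<in>toeplitz n. \<forall>a b.
        \<phi> (\<lambda>k l. a * A k l + b * B k l) = (\<lambda>f. a * \<phi> A f + b * \<phi> B f)) \<and>
     \<phi> (id_mat n) = fourier_state n \<and>
     (\<forall>p X. (\<forall>i<p. \<forall>j<p. X i j \<in> toeplitz n) \<longrightarrow>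
        (pos_toep n p X \<longleftrightarrow> pos_dual n p (\<lambda>i j. \<phi> (X i j))))"

end

theory Submission
  imports Defs "HOL-Library.Complex_Order"
begin


definition qf :: "'i set \<Rightarrow> ('i \<Rightarrow> 'i \<Rightarrow> complex) \<Rightarrow> ('i \<Rightarrow> complex) \<Rightarrow> complex" where
  "qf I A v = (\<Sum>a\<in>I. \<Sum>b\<in>I. cnj (v a) * A a b * v b)"

lemma psd_iff: "psd I A \<longleftrightarrow> (\<forall>v. 0 \<le> qf I A v)"
  by (auto simp: psd_def qf_def less_eq_complex_def)

lemma psdI: "(\<And>v. 0 \<le> qf I A v) \<Longrightarrow> psd I A"
  by (simp add: psd_iff)

lemma psdD: "psd I A \<Longrightarrow> 0 \<le> qf I A v"
  by (simp add: psd_iff)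

lemma qf_cong: "(\<And>a b. a \<in> I \<Longrightarrow> b \<in> I \<Longrightarrow> A a b = B a b) \<Longrightarrow> qf I A v = qf I B v"
  unfolding qf_def by (intro sum.cong refl) auto

lemma psd_cong: "(\<And>a b. a \<in> I \<Longrightarrow> b \<in> I \<Longrightarrow> A a b = B a b) \<Longrightarrow> psd I A = psd I B"
  using qf_cong[of I A B] by (simp add: psd_iff)

lemma qf_vcong: "(\<And>a. a \<in> I \<Longrightarrow> v a = w a) \<Longrightarrow> qf I A v = qf I A w"
  unfolding qf_def by (intro sum.cong refl) auto

lemma qf_zero_ext:
  assumes "finite I" "J \<subseteq> I" "\<And>a. a \<in> I - J \<Longrightarrow> v a = 0"
  shows "qf I A v = qf J A v"
proof -
  have fJ: "finite J" using assms finite_subset by blast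
  have "qf I A v = (\<Sum>a\<in>I. \<Sum>b\<in>J. cnj (v a) * A a b * v b)"
    unfolding qf_def
    by (intro sum.cong refl sum.mono_neutral_right assms) (auto simp: assms)
  also have "\<dots> = qf J A v"
    unfolding qf_def
    by (intro sum.mono_neutral_right assms) (auto simp: assms)
  finally show ?thesis .
qed

lemma psd_subset:
  assumes "finite I" "J \<subseteq> I" "psd I A" shows "psd J A"
proof (rule psdI)
  fix v
  define v' where "v' = (\<lambda>a. if a \<in> J then v a else (0::complex))"
  have "qf I A v' = qf J A v'"
    by (rule qf_zero_ext) (auto simp: assms v'_def)
  also have "\<dots> = qf J A v" by (rule qf_vcong) (simp add: v'_def)
  finally show "0 \<le> qf J A v" using psdD[OF assms(3), of v'] by simp
qed

lemma qf_two:
  assumes "a \<noteq> b"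
  shows "qf {a,b} A v = cnj (v a) * A a a * v a + cnj (v a) * A a b * v b
     + (cnj (v b) * A b a * v a + cnj (v b) * A b b * v b)"
  using assms unfolding qf_def by simp

lemma psd_diag:
  assumes "finite I" "psd I A" "a \<in> I" shows "0 \<le> A a a"
proof -
  have "psd {a} A" by (rule psd_subset[OF assms(1) _ assms(2)]) (use assms in auto)
  from psdD[OF this, of "\<lambda>_. 1"] show ?thesis by (simp add: qf_def)
qed

lemma psd_herm:
  assumes "finite I" "psd I A" "a \<in> I" "b \<in> I" shows "A b a = cnj (A a b)"
proof (cases "a = b")
  case True
  with psd_diag[OF assms(1,2,3)] show ?thesis
    by (auto simp: less_eq_complex_def complex_eq_iff)
next
  case False
  have P: "psd {a,b} A" by (rule psd_subset[OF assms(1) _ assms(2)]) (use assms in auto)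
  have da: "Im (A a a) = 0" and db: "Im (A b b) = 0" using psd_diag[OF assms(1,2)] assms(3,4)
    by (auto simp: less_eq_complex_def)
  have 1: "0 \<le> qf {a,b} A (\<lambda>_. 1)" using psdD[OF P] .
  have 2: "0 \<le> qf {a,b} A (\<lambda>c. if c = a then 1 else \<i>)" using psdD[OF P] .
  have e1: "qf {a,b} A (\<lambda>_. 1) = A a a + A a b + (A b a + A b b)"
    using False by (simp add: qf_two)
  from 1 da db have i1: "Im (A a b) + Im (A b a) = 0"
    unfolding e1 by (simp add: less_eq_complex_def)
  from 2 da db False have i2: "Re (A a b) - Re (A b a) = 0"
    by (simp add: qf_two less_eq_complex_def)
  from i1 i2 show ?thesis by (simp add: complex_eq_iff)
qed


lemma qf_add: "qf I (\<lambda>a b. A a b + B a b) v = qf I A v + qf I B v"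
  unfolding qf_def by (simp add: distrib_left distrib_right sum.distrib)

lemma qf_diff: "qf I (\<lambda>a b. A a b - B a b) v = qf I A v - qf I B v"
  unfolding qf_def by (simp add: right_diff_distrib left_diff_distrib sum_subtractf)

lemma qf_scale: "qf I (\<lambda>a b. c * A a b) v = c * qf I A v"
  unfolding qf_def by (simp add: sum_distrib_left ac_simps)

lemma qf_rank: "qf I (\<lambda>a b. r a * c b) v = (\<Sum>a\<in>I. cnj (v a) * r a) * (\<Sum>b\<in>I. c b * v b)"
  unfolding qf_def sum_product by (intro sum.cong refl) (simp add: ac_simps)

lemma cnj_mult_self_nonneg: "0 \<le> cnj z * z"
  by (simp add: less_eq_complex_def)

lemma psd_add: "psd I A \<Longrightarrow> psd I B \<Longrightarrow> psd I (\<lambda>a b. A a b + B a b)"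
  by (simp add: psd_iff qf_add)

lemma psd_rank1:
  assumes "0 \<le> c" shows "psd I (\<lambda>a b. c * (cnj (r a) * r b))"
proof (rule psdI)
  fix v
  have e: "qf I (\<lambda>a b. c * (cnj (r a) * r b)) v = c * (cnj (\<Sum>b\<in>I. r b * v b) * (\<Sum>b\<in>I. r b * v b))"
    by (subst qf_scale, subst qf_rank) (simp add: ac_simps)
  show "0 \<le> qf I (\<lambda>a b. c * (cnj (r a) * r b)) v"
    unfolding e by (rule mult_nonneg_nonneg[OF assms cnj_mult_self_nonneg])
qed

lemma qf_insert:
  assumes "finite S" "x \<notin> S"
  shows "qf (insert x S) A v = cnj (v x) * A x x * v x + cnj (v x) * (\<Sum>b\<in>S. A x b * v b)
     + (\<Sum>a\<in>S. cnj (v a) * A a x) * v x + qf S A v"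
  using assms unfolding qf_def
  by (simp add: sum.distrib sum_distrib_left sum_distrib_right ac_simps)

lemma nonneg_complex_cnj: "0 \<le> (d::complex) \<Longrightarrow> cnj d = d"
  by (simp add: less_eq_complex_def complex_eq_iff)

lemma psd_schur:
  assumes fin: "finite S" and x: "x \<notin> S" and P: "psd (insert x S) A"
    and d0: "0 \<le> A x x" and dn: "A x x \<noteq> 0"
  shows "psd S (\<lambda>a b. A a b - A a x * A x b / A x x)"
proof (rule psdI)
  fix v
  define d where "d = A x x"
  define s where "s = (\<Sum>b\<in>S. A x b * v b)"
  define v' where "v' = (\<lambda>c. if c = x then - s / d else v c)"
  have fi: "finite (insert x S)" using fin by simp
  have herm: "A a x = cnj (A x a)" if "a \<in> S" for a
    using psd_herm[OF fi P, of x a] that by simp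
  have t: "(\<Sum>a\<in>S. cnj (v a) * A a x) = cnj s"
    unfolding s_def by (simp add: herm mult.commute)
  have s': "(\<Sum>b\<in>S. A x b * v' b) = s" unfolding s_def v'_def using x
    by (intro sum.cong refl) auto
  have t': "(\<Sum>a\<in>S. cnj (v' a) * A a x) = cnj s" unfolding t[symmetric] v'_def using x
    by (intro sum.cong refl) auto
  have q': "qf S A v' = qf S A v" unfolding v'_def using x by (intro qf_vcong) auto
  have cd: "cnj d = d" using d0 unfolding d_def by (rule nonneg_complex_cnj)
  have dn': "d \<noteq> 0" using dn d_def by simp
  have "qf (insert x S) A v' = cnj (- s / d) * d * (- s / d) + cnj (- s / d) * s + cnj s * (- s / d) + qf S A v"
    using qf_insert[OF fin x, of A v'] s' t' q' by (simp add: v'_def d_def)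
  also have "\<dots> = qf S A v - cnj s * s / d"
    using cd dn' by (simp add: field_simps)
  also have "\<dots> = qf S (\<lambda>a b. A a b - A a x * A x b / A x x) v"
  proof -
    have "qf S (\<lambda>a b. A a x * A x b / A x x) v = qf S (\<lambda>a b. A a x * (A x b / d)) v"
      by (simp add: d_def)
    also have "\<dots> = cnj s * (s / d)"
      unfolding qf_rank t s_def by (simp add: sum_divide_distrib[symmetric] mult.assoc sum_distrib_left[symmetric] times_divide_eq_left)
    finally show ?thesis by (simp add: qf_diff)
  qed
  finally show "0 \<le> qf S (\<lambda>a b. A a b - A a x * A x b / A x x) v"
    using psdD[OF P, of v'] by simp
qed


lemma psd_zero_diag:
  assumes fin: "finite I" and P: "psd I A" and x: "x \<in> I" and b: "b \<in> I" and z: "A x x = 0"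
  shows "A x b = 0"
proof (rule ccontr)
  assume c0: "A x b \<noteq> 0"
  then have xb: "x \<noteq> b" using z by auto
  have P2: "psd {x,b} A" by (rule psd_subset[OF fin _ P]) (use x b in auto)
  define c where "c = A x b"
  have hb: "A b x = cnj c" using psd_herm[OF fin P x b] c_def by simp
  define K where "K = (Re c)^2 + (Im c)^2"
  have K0: "K > 0" using c0 unfolding K_def c_def by (simp add: complex_eq_iff sum_power2_gt_zero_iff)
  define R where "R = (\<bar>Re (A b b)\<bar> + 1) / (2 * K)"
  define v where "v = (\<lambda>y. if y = x then - (complex_of_real R * c) else 1)"
  have "0 \<le> qf {x,b} A v" using psdD[OF P2] .
  then have "0 \<le> Re (qf {x,b} A v)" by (simp add: less_eq_complex_def)
  also have "Re (qf {x,b} A v) = Re (A b b) - 2 * R * K"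
    using xb z hb unfolding qf_two[OF xb] v_def c_def[symmetric] K_def
    by (simp add: algebra_simps power2_eq_square)
  also have "2 * R * K = \<bar>Re (A b b)\<bar> + 1" unfolding R_def using K0 by simp
  finally show False by linarith
qed

lemma psd_zero_extend:
  assumes fin: "finite I" and sub: "J \<subseteq> I" and P: "psd J A"
  shows "psd I (\<lambda>a b. if a \<in> J \<and> b \<in> J then A a b else 0)"
proof (rule psdI)
  fix v
  let ?M = "\<lambda>a b. if a \<in> J \<and> b \<in> J then A a b else 0"
  have "qf I ?M v = (\<Sum>a\<in>I. \<Sum>b\<in>J. cnj (v a) * ?M a b * v b)"
    unfolding qf_def by (intro sum.cong refl sum.mono_neutral_right fin sub) auto
  also have "\<dots> = (\<Sum>a\<in>J. \<Sum>b\<in>J. cnj (v a) * ?M a b * v b)"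
    by (intro sum.mono_neutral_right fin sub) auto
  also have "\<dots> = qf J A v" unfolding qf_def by (intro sum.cong refl) auto
  finally show "0 \<le> qf I ?M v" using psdD[OF P] by simp
qed

lemma psd_reindex:
  assumes bij: "bij_betw h I' I" and P: "psd I A"
  shows "psd I' (\<lambda>a b. A (h a) (h b))"
proof (rule psdI)
  fix v
  define v' where "v' = (\<lambda>y. v (inv_into I' h y) :: complex)"
  have vv: "v' (h a) = v a" if "a \<in> I'" for a
    unfolding v'_def using bij_betw_inv_into_left[OF bij that] by simp
  have "qf I A v' = (\<Sum>a\<in>I'. \<Sum>b\<in>I. cnj (v' (h a)) * A (h a) b * v' b)"
    unfolding qf_def by (rule sum.reindex_bij_betw[OF bij, symmetric])
  also have "\<dots> = (\<Sum>a\<in>I'. \<Sum>b\<in>I'. cnj (v' (h a)) * A (h a) (h b) * v' (h b))"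
    by (intro sum.cong refl sum.reindex_bij_betw[OF bij, symmetric])
  also have "\<dots> = qf I' (\<lambda>a b. A (h a) (h b)) v"
    unfolding qf_def by (intro sum.cong refl) (simp add: vv)
  finally show "0 \<le> qf I' (\<lambda>a b. A (h a) (h b)) v" using psdD[OF P, of v'] by simp
qed

lemma nonneg_sqrt_decomp:
  assumes "0 \<le> (d::complex)"
  obtains sd where "sd * sd = d" "cnj sd = sd"
proof -
  define sd where "sd = complex_of_real (sqrt (Re d))"
  have "Re d \<ge> 0" "Im d = 0" using assms by (auto simp: less_eq_complex_def)
  then have "sd * sd = d" unfolding sd_def
    by (simp add: complex_eq_iff flip: of_real_mult)
  moreover have "cnj sd = sd" unfolding sd_def by simp
  ultimately show ?thesis using that by blast
qed

lemma gram:
  assumes "finite I" "psd I A"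
  shows "\<exists>(D::nat) g. \<forall>a\<in>I. \<forall>b\<in>I. A a b = (\<Sum>t<D. cnj (g t a) * g t b)"
  using assms
proof (induction I arbitrary: A rule: finite_induct)
  case empty then show ?case by auto
next
  case (insert x S)
  have fi: "finite (insert x S)" using insert by simp
  have PS: "psd S A" by (rule psd_subset[OF fi _ insert.prems]) auto
  have d0: "0 \<le> A x x" using psd_diag[OF fi insert.prems] by simp
  have herm: "A b a = cnj (A a b)" if "a \<in> insert x S" "b \<in> insert x S" for a b
    using psd_herm[OF fi insert.prems that] .
  show ?case
  proof (cases "A x x = 0")
    case True
    have zx: "A x b = 0" if "b \<in> insert x S" for b
      using psd_zero_diag[OF fi insert.prems _ that True] by simp
    have zx': "A b x = 0" if "b \<in> insert x S" for b
      using herm[OF _ that, of x] zx[OF that] by simp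
    obtain D :: nat and g where g: "\<forall>a\<in>S. \<forall>b\<in>S. A a b = (\<Sum>t<D. cnj (g t a) * g t b)"
      using insert.IH[OF PS] by blast
    show ?thesis
    proof (intro exI ballI)
      fix a b assume a: "a \<in> insert x S" and b: "b \<in> insert x S"
      show "A a b = (\<Sum>t<D. cnj ((\<lambda>t a. if a = x then 0 else g t a) t a) * (\<lambda>t a. if a = x then 0 else g t a) t b)"
        using g a b zx zx' insert(2) by (cases "a = x"; cases "b = x") auto
    qed
  next
    case False
    let ?A' = "\<lambda>a b. A a b - A a x * A x b / A x x"
    have PS': "psd S ?A'" by (rule psd_schur[OF insert(1,2) insert.prems d0 False])
    obtain D :: nat and g where g: "\<forall>a\<in>S. \<forall>b\<in>S. ?A' a b = (\<Sum>t<D. cnj (g t a) * g t b)"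
      using insert.IH[OF PS'] by blast
    obtain sd where sd: "sd * sd = A x x" "cnj sd = sd" using nonneg_sqrt_decomp[OF d0] by blast
    have sdn: "sd \<noteq> 0" using sd False by auto
    have cd: "cnj (A x x) = A x x" using nonneg_complex_cnj[OF d0] .
    define g' where "g' = (\<lambda>t a. if t < D then (if a = x then 0 else g t a) else A x a / sd)"
    have main: "(\<Sum>t<Suc D. cnj (g' t a) * g' t b) =
       (if a = x \<or> b = x then 0 else ?A' a b) + cnj (A x a) * A x b / A x x"
      if a: "a \<in> insert x S" and b: "b \<in> insert x S" for a b
    proof -
      have "(\<Sum>t<Suc D. cnj (g' t a) * g' t b) = (\<Sum>t<D. cnj (g' t a) * g' t b) + cnj (A x a / sd) * (A x b / sd)"
        by (simp add: g'_def)
      also have "(\<Sum>t<D. cnj (g' t a) * g' t b) = (if a = x \<or> b = x then 0 else ?A' a b)"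
        using a b g by (auto simp: g'_def)
      also have "cnj (A x a / sd) * (A x b / sd) = cnj (A x a) * A x b / A x x"
        using sd sdn by (simp add: field_simps flip: sd(1))
      finally show ?thesis .
    qed
    show ?thesis
    proof (intro exI ballI)
      fix a b assume a: "a \<in> insert x S" and b: "b \<in> insert x S"
      have "A a b = (if a = x \<or> b = x then 0 else ?A' a b) + cnj (A x a) * A x b / A x x"
      proof (cases "a = x")
        case True then show ?thesis using cd False by simp
      next
        case ax: False
        show ?thesis
        proof (cases "b = x")
          case True then show ?thesis using ax herm[OF _ a, of x] False by simp
        next
          case False
          then show ?thesis using ax herm[OF _ a, of x] \<open>A x x \<noteq> 0\<close> by simp
        qed
      qed
      then show "A a b = (\<Sum>t<Suc D. cnj (g' t a) * g' t b)" using main[OF a b] by simp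
    qed
  qed
qed


lemma psd_rank1': "0 \<le> c \<Longrightarrow> psd I (\<lambda>a b. c * (cnj (r a) * r b))"
  by (rule psd_rank1)

lemma inverse_nonneg_complex: "0 \<le> (d::complex) \<Longrightarrow> 0 \<le> 1 / d"
  by (auto simp: less_eq_complex_def divide_complex_def inverse_complex_def)

lemma glue:
  assumes "finite J"
  shows "finite I1 \<Longrightarrow> finite I2 \<Longrightarrow> I1 \<inter> J = {} \<Longrightarrow> I2 \<inter> J = {} \<Longrightarrow> I1 \<inter> I2 = {} \<Longrightarrow>
    psd (I1 \<union> J) M1 \<Longrightarrow> psd (J \<union> I2) M2 \<Longrightarrow> (\<forall>a\<in>J. \<forall>b\<in>J. M1 a b = M2 a b) \<Longrightarrow>
    \<exists>M. psd (I1 \<union> J \<union> I2) M \<and> (\<forall>a\<in>I1 \<union> J. \<forall>b\<in>I1 \<union> J. M a b = M1 a b)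
       \<and> (\<forall>a\<in>J \<union> I2. \<forall>b\<in>J \<union> I2. M a b = M2 a b)"
  using assms
proof (induction J arbitrary: M1 M2 rule: finite_induct)
  case empty
  let ?M = "\<lambda>a b. if a \<in> I1 \<and> b \<in> I1 then M1 a b else if a \<in> I2 \<and> b \<in> I2 then M2 a b else 0"
  have f: "finite (I1 \<union> I2)" using empty by simp
  have p1: "psd (I1 \<union> I2) (\<lambda>a b. if a \<in> I1 \<and> b \<in> I1 then M1 a b else 0)"
    by (rule psd_zero_extend[OF f]) (use empty in auto)
  have p2: "psd (I1 \<union> I2) (\<lambda>a b. if a \<in> I2 \<and> b \<in> I2 then M2 a b else 0)"
    by (rule psd_zero_extend[OF f]) (use empty in auto)
  have "psd (I1 \<union> I2) ?M"
    using psd_add[OF p1 p2] by (rule iffD1[OF psd_cong, rotated]) (use empty in auto)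
  then show ?case using empty by (intro exI[of _ ?M]) auto
next
  case (insert x J')
  let ?U1 = "I1 \<union> J'" and ?U2 = "J' \<union> I2"
  have e1: "I1 \<union> insert x J' = insert x ?U1" by auto
  have e2: "insert x J' \<union> I2 = insert x ?U2" by auto
  have e3: "I1 \<union> insert x J' \<union> I2 = insert x (I1 \<union> J' \<union> I2)" by auto
  have fU1: "finite ?U1" and fU2: "finite ?U2" and fU: "finite (I1 \<union> J' \<union> I2)"
    using insert by auto
  have xU1: "x \<notin> ?U1" and xU2: "x \<notin> ?U2" and xU: "x \<notin> I1 \<union> J' \<union> I2" using insert by auto
  have P1: "psd (insert x ?U1) M1" using insert.prems(6) e1 by simp
  have P2: "psd (insert x ?U2) M2" using insert.prems(7) e2 by simp
  have fi1: "finite (insert x ?U1)" and fi2: "finite (insert x ?U2)" using fU1 fU2 by auto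
  have agree: "M1 a b = M2 a b" if "a \<in> insert x J'" "b \<in> insert x J'" for a b
    using insert.prems(8) that by auto
  have dd: "M1 x x = M2 x x" using agree by simp
  have d0: "0 \<le> M1 x x" using psd_diag[OF fi1 P1] by simp
  have d0': "0 \<le> M2 x x" using psd_diag[OF fi2 P2] by simp
  have h1: "M1 b a = cnj (M1 a b)" if "a \<in> insert x ?U1" "b \<in> insert x ?U1" for a b
    using psd_herm[OF fi1 P1 that] .
  have h2: "M2 b a = cnj (M2 a b)" if "a \<in> insert x ?U2" "b \<in> insert x ?U2" for a b
    using psd_herm[OF fi2 P2 that] .
  have IH: "\<exists>M. psd (I1 \<union> J' \<union> I2) M \<and> (\<forall>a\<in>?U1. \<forall>b\<in>?U1. M a b = N1 a b)
       \<and> (\<forall>a\<in>?U2. \<forall>b\<in>?U2. M a b = N2 a b)"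
    if "psd ?U1 N1" "psd ?U2 N2" "\<forall>a\<in>J'. \<forall>b\<in>J'. N1 a b = N2 a b" for N1 N2
    using insert.IH[of N1 N2] insert.prems that by auto
  let ?Z = "\<lambda>M' a b. if a \<in> I1 \<union> J' \<union> I2 \<and> b \<in> I1 \<union> J' \<union> I2 then M' a b else 0"
  have Zpsd: "psd (insert x (I1 \<union> J' \<union> I2)) (?Z M')" if "psd (I1 \<union> J' \<union> I2) M'" for M'
    by (rule psd_zero_extend) (use fU that in auto)
  show ?case
  proof (cases "M1 x x = 0")
    case True
    have z1: "M1 x b = 0" "M1 b x = 0" if "b \<in> insert x ?U1" for b
      using psd_zero_diag[OF fi1 P1 _ that True] h1[OF that, of x] by auto
    have z2: "M2 x b = 0" "M2 b x = 0" if "b \<in> insert x ?U2" for b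
      using psd_zero_diag[OF fi2 P2 _ that] True dd h2[OF that, of x] by auto
    have Q1: "psd ?U1 M1" by (rule psd_subset[OF fi1 _ P1]) auto
    have Q2: "psd ?U2 M2" by (rule psd_subset[OF fi2 _ P2]) auto
    obtain M' where M': "psd (I1 \<union> J' \<union> I2) M'" "\<forall>a\<in>?U1. \<forall>b\<in>?U1. M' a b = M1 a b"
       "\<forall>a\<in>?U2. \<forall>b\<in>?U2. M' a b = M2 a b"
      using IH[OF Q1 Q2] insert.prems(8) by auto
    show ?thesis
    proof (intro exI conjI)
      show "psd (I1 \<union> insert x J' \<union> I2) (?Z M')" unfolding e3 by (rule Zpsd[OF M'(1)])
      show "\<forall>a\<in>I1 \<union> insert x J'. \<forall>b\<in>I1 \<union> insert x J'. ?Z M' a b = M1 a b"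
        using M'(2) z1 xU by (auto simp: e1)
      show "\<forall>a\<in>insert x J' \<union> I2. \<forall>b\<in>insert x J' \<union> I2. ?Z M' a b = M2 a b"
        using M'(3) z2 xU by (auto simp: e2)
    qed
  next
    case False
    define d where "d = M1 x x"
    have dn: "d \<noteq> 0" using False d_def by simp
    have cd: "cnj d = d" using nonneg_complex_cnj[OF d0] d_def by simp
    let ?S1 = "\<lambda>a b. M1 a b - M1 a x * M1 x b / M1 x x"
    let ?S2 = "\<lambda>a b. M2 a b - M2 a x * M2 x b / M2 x x"
    have Q1: "psd ?U1 ?S1" by (rule psd_schur[OF fU1 xU1 P1 d0 False])
    have Q2: "psd ?U2 ?S2" by (rule psd_schur[OF fU2 xU2 P2 d0']) (use False dd in simp)
    have ag: "\<forall>a\<in>J'. \<forall>b\<in>J'. ?S1 a b = ?S2 a b" using agree by auto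
    obtain M' where M': "psd (I1 \<union> J' \<union> I2) M'" "\<forall>a\<in>?U1. \<forall>b\<in>?U1. M' a b = ?S1 a b"
       "\<forall>a\<in>?U2. \<forall>b\<in>?U2. M' a b = ?S2 a b"
      using IH[OF Q1 Q2 ag] by blast
    define r where "r = (\<lambda>a. if a \<in> insert x ?U1 then M1 x a else M2 x a)"
    have r2: "r a = M2 x a" if "a \<in> insert x ?U2" for a
      using that agree insert.prems(4,5) insert(2) unfolding r_def by auto
    let ?M = "\<lambda>a b. ?Z M' a b + 1 / d * (cnj (r a) * r b)"
    show ?thesis
    proof (intro exI conjI)
      show "psd (I1 \<union> insert x J' \<union> I2) ?M" unfolding e3
        by (rule psd_add[OF Zpsd[OF M'(1)] psd_rank1[OF inverse_nonneg_complex]]) (use d0 d_def in simp)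
      show "\<forall>a\<in>I1 \<union> insert x J'. \<forall>b\<in>I1 \<union> insert x J'. ?M a b = M1 a b"
      proof (intro ballI)
        fix a b assume a: "a \<in> I1 \<union> insert x J'" and b: "b \<in> I1 \<union> insert x J'"
        have a': "a \<in> insert x ?U1" and b': "b \<in> insert x ?U1" using a b by auto
        have ra: "cnj (r a) = M1 a x" using h1[OF _ a', of x] a' by (simp add: r_def)
        have rb: "r b = M1 x b" using b' by (simp add: r_def)
        show "?M a b = M1 a b"
        proof (cases "a = x")
          case True then show ?thesis using ra rb dn xU by (simp add: d_def)
        next
          case ax: False
          show ?thesis
          proof (cases "b = x")
            case True then show ?thesis using ra rb dn xU ax by (simp add: d_def)
          next
            case False
            then show ?thesis using ra rb dn xU ax M'(2) a' b' by (simp add: d_def)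
          qed
        qed
      qed
      show "\<forall>a\<in>insert x J' \<union> I2. \<forall>b\<in>insert x J' \<union> I2. ?M a b = M2 a b"
      proof (intro ballI)
        fix a b assume a: "a \<in> insert x J' \<union> I2" and b: "b \<in> insert x J' \<union> I2"
        have a': "a \<in> insert x ?U2" and b': "b \<in> insert x ?U2" using a b by auto
        have ra: "cnj (r a) = M2 a x" using h2[OF _ a', of x] r2[OF a'] by simp
        have rb: "r b = M2 x b" using r2[OF b'] .
        have d2: "d = M2 x x" using dd d_def by simp
        show "?M a b = M2 a b"
        proof (cases "a = x")
          case True then show ?thesis using ra rb dn xU d2 by simp
        next
          case ax: False
          show ?thesis
          proof (cases "b = x")
            case True then show ?thesis using ra rb dn xU ax d2 by simp
          next
            case False
            then show ?thesis using ra rb dn xU ax M'(3) a' b' d2 by simp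
          qed
        qed
      qed
    qed
  qed
qed


lemma banded_ext:
  fixes \<tau> :: "nat \<Rightarrow> nat \<Rightarrow> int \<Rightarrow> complex"
  assumes n1: "1 \<le> n" and P: "psd ({..<p} \<times> {..<n}) (\<lambda>(i,k) (j,l). \<tau> i j (int k - int l))"
    and N: "n \<le> N"
  shows "\<exists>M. psd ({..<p} \<times> {..<N}) M \<and> (\<forall>i<p. \<forall>j<p. \<forall>a<N. \<forall>b<N.
      \<bar>int a - int b\<bar> < int n \<longrightarrow> M (i,a) (j,b) = \<tau> i j (int a - int b))"
  using N
proof (induction N rule: dec_induct)
  case base
  show ?case using P by (intro exI[of _ "\<lambda>(i,k) (j,l). \<tau> i j (int k - int l)"]) auto
next
  case (step N)
  obtain M1 where M1: "psd ({..<p} \<times> {..<N}) M1" "\<forall>i<p. \<forall>j<p. \<forall>a<N. \<forall>b<N.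
      \<bar>int a - int b\<bar> < int n \<longrightarrow> M1 (i,a) (j,b) = \<tau> i j (int a - int b)"
    using step.IH by blast
  define c where "c = Suc N - n"
  have cN: "c \<le> N" "N < c + n" "c + n = Suc N" using n1 step.hyps unfolding c_def by auto
  define I1 where "I1 = {..<p} \<times> {..<c}"
  define J where "J = {..<p} \<times> {c..<N}"
  define I2 where "I2 = {..<p} \<times> {N}"
  define M2 where "M2 = (\<lambda>(i::nat,a::nat) (j::nat,b::nat). \<tau> i j (int a - int b))"
  have U1: "I1 \<union> J = {..<p} \<times> {..<N}" unfolding I1_def J_def using cN by auto
  have U2: "J \<union> I2 = {..<p} \<times> {c..N}" unfolding I2_def J_def using cN by auto
  have U: "I1 \<union> J \<union> I2 = {..<p} \<times> {..<Suc N}" unfolding I1_def I2_def J_def using cN by auto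
  have bij: "bij_betw (\<lambda>(i,a). (i, a - c)) ({..<p} \<times> {c..N}) ({..<p} \<times> {..<n})"
    by (rule bij_betw_byWitness[where f' = "\<lambda>(i,k). (i, k + c)"]) (use cN in auto)
  have "psd ({..<p} \<times> {c..N}) (\<lambda>x y. (\<lambda>(i,k) (j,l). \<tau> i j (int k - int l)) ((\<lambda>(i,a). (i, a - c)) x) ((\<lambda>(i,a). (i, a - c)) y))"
    by (rule psd_reindex[OF bij P])
  then have P2: "psd (J \<union> I2) M2" unfolding U2
    by (rule iffD1[OF psd_cong, rotated]) (auto simp: M2_def of_nat_diff)
  have P1: "psd (I1 \<union> J) M1" using M1(1) U1 by simp
  have ag: "\<forall>a\<in>J. \<forall>b\<in>J. M1 a b = M2 a b"
    using M1(2) cN unfolding J_def M2_def by auto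
  obtain M where M: "psd (I1 \<union> J \<union> I2) M" "\<forall>a\<in>I1 \<union> J. \<forall>b\<in>I1 \<union> J. M a b = M1 a b"
       "\<forall>a\<in>J \<union> I2. \<forall>b\<in>J \<union> I2. M a b = M2 a b"
  proof -
    have d: "I1 \<inter> J = {}" "I2 \<inter> J = {}" "I1 \<inter> I2 = {}" "finite I1" "finite I2" "finite J"
      unfolding I1_def J_def I2_def using cN by auto
    show ?thesis using glue[OF d(6) d(4,5,1,2,3) P1 P2 ag] that by blast
  qed
  show ?case
  proof (intro exI conjI allI impI)
    show "psd ({..<p} \<times> {..<Suc N}) M" using M(1) U by simp
    fix i j a b assume i: "i < p" and j: "j < p" and a: "a < Suc N" and b: "b < Suc N"
      and ab: "\<bar>int a - int b\<bar> < int n"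
    show "M (i, a) (j, b) = \<tau> i j (int a - int b)"
    proof (cases "a < N \<and> b < N")
      case True
      then show ?thesis using M(2) M1(2) i j ab U1 by auto
    next
      case False
      then have "c \<le> a" "c \<le> b" using a b ab cN by auto
      then have "(i,a) \<in> J \<union> I2" "(j,b) \<in> J \<union> I2" using U2 i j a b by auto
      then show ?thesis using M(3) by (auto simp: M2_def)
    qed
  qed
qed



definition RR :: "nat \<Rightarrow> int set" where "RR n = {-(int n - 1)..int n - 1}"

definition avg :: "nat \<Rightarrow> (complex \<Rightarrow> complex) \<Rightarrow> complex" where
  "avg L F = (\<Sum>r<L. F (cis (2 * pi * real r / real L))) / of_nat L"

definition coefs :: "nat \<Rightarrow> (complex \<Rightarrow> complex) \<Rightarrow> (int \<Rightarrow> complex) \<Rightarrow> bool" where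
  "coefs n f \<alpha> \<longleftrightarrow> (\<forall>z. f z = (if cmod z = 1 then (\<Sum>k\<in>RR n. \<alpha> k * z powi k) else 0))"

lemma trigpoly_coefs: "trigpoly n = {f. \<exists>\<alpha>. coefs n f \<alpha>}"
  unfolding trigpoly_def coefs_def RR_def by simp

definition coef :: "nat \<Rightarrow> (complex \<Rightarrow> complex) \<Rightarrow> int \<Rightarrow> complex" where
  "coef n f m = avg (2 * n) (\<lambda>z. f z * z powi (- m))"

lemma cis_ne_1:
  assumes "0 < L" "\<bar>e\<bar> < int L" "e \<noteq> 0"
  shows "cis (2 * pi * real_of_int e / real L) \<noteq> 1"
proof
  assume "cis (2 * pi * real_of_int e / real L) = 1"
  then have "cos (2 * pi * real_of_int e / real L) = 1" by (metis cis.sel(1) one_complex.sel(1))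
  then obtain k :: int where k: "2 * pi * real_of_int e / real L = real_of_int k * 2 * pi"
    using cos_one_2pi_int by blast
  then have "real_of_int e = real_of_int k * real L" using assms(1) by (simp add: field_simps)
  then have ek: "e = k * int L" by (metis of_int_eq_iff of_int_mult of_int_of_nat_eq)
  show False
  proof (cases "k = 0")
    case True then show False using ek assms by simp
  next
    case False
    have k1: "1 \<le> \<bar>k\<bar>" using False by linarith
    then have "\<bar>e\<bar> \<ge> int L" unfolding ek abs_mult using k1 by (simp add: mult_le_cancel_right1)
    then show False using assms by simp
  qed
qed

lemma root_sum:
  assumes "0 < L" "\<bar>e\<bar> < int L"
  shows "(\<Sum>r<L. cis (2 * pi * real r / real L) powi e) = (if e = 0 then of_nat L else 0)"
proof (cases "e = 0")
  case True then show ?thesis by simp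
next
  case False
  define w where "w = cis (2 * pi * real_of_int e / real L)"
  have eq: "cis (2 * pi * real r / real L) powi e = w ^ r" for r
    by (simp add: w_def cis_power_int Complex.DeMoivre field_simps)
  have w1: "w \<noteq> 1" using cis_ne_1[OF assms False] w_def by simp
  have wL: "w ^ L = 1"
  proof -
    have "w ^ L = cis (2 * pi * real_of_int e)" unfolding w_def Complex.DeMoivre using assms(1) by simp
    also have "\<dots> = 1" by (rule cis_multiple_2pi) simp
    finally show ?thesis .
  qed
  show ?thesis unfolding eq geometric_sum[OF w1] wL using False by simp
qed

lemma avg_powi:
  assumes "0 < L" "\<bar>e\<bar> < int L"
  shows "avg L (\<lambda>z. z powi e) = (if e = 0 then 1 else 0)"
  unfolding avg_def root_sum[OF assms] using assms by simp

lemma avg_sum: "avg L (\<lambda>z. \<Sum>x\<in>S. F x z) = (\<Sum>x\<in>S. avg L (F x))"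
  unfolding avg_def by (simp add: sum.swap[of _ S] sum_divide_distrib)

lemma avg_cmult: "avg L (\<lambda>z. c * F z) = c * avg L F"
  unfolding avg_def by (simp add: sum_distrib_left)

lemma avg_cong: "(\<And>z. cmod z = 1 \<Longrightarrow> F z = G z) \<Longrightarrow> avg L F = avg L G"
  unfolding avg_def by (intro arg_cong[where f = "\<lambda>x. x / _"] sum.cong refl) simp

lemma avg_nonneg:
  assumes "\<And>z. cmod z = 1 \<Longrightarrow> 0 \<le> F z"
  shows "0 \<le> avg L F"
proof -
  have "0 \<le> (\<Sum>r<L. F (cis (2 * pi * real r / real L)))"
    by (intro sum_nonneg assms) simp
  then show ?thesis unfolding avg_def
    by (auto simp: less_eq_complex_def)
qed

lemma RR_mem: "k \<in> RR n \<longleftrightarrow> \<bar>k\<bar> \<le> int n - 1"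
  unfolding RR_def by auto

lemma coef_eq:
  assumes c: "coefs n f \<alpha>" and m: "m \<in> RR n"
  shows "coef n f m = \<alpha> m"
proof -
  have n1: "1 \<le> n" using m unfolding RR_def by auto
  have "coef n f m = avg (2 * n) (\<lambda>z. \<Sum>k\<in>RR n. \<alpha> k * z powi (k - m))"
    unfolding coef_def
  proof (rule avg_cong)
    fix z :: complex assume z: "cmod z = 1"
    then have z0: "z \<noteq> 0" by auto
    show "f z * z powi - m = (\<Sum>k\<in>RR n. \<alpha> k * z powi (k - m))"
      using c z z0 unfolding coefs_def
      by (simp add: sum_distrib_right power_int_diff mult.assoc divide_inverse power_int_minus)
  qed
  also have "\<dots> = (\<Sum>k\<in>RR n. \<alpha> k * (if k - m = 0 then 1 else 0))"
    unfolding avg_sum avg_cmult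
  proof (intro sum.cong refl arg_cong[where f = "\<lambda>x. _ * x"] avg_powi)
    show "0 < 2 * n" using n1 by simp
    fix k assume "k \<in> RR n"
    then show "\<bar>k - m\<bar> < int (2 * n)" using m unfolding RR_mem by simp
  qed
  also have "\<dots> = (\<Sum>k\<in>RR n. if k = m then \<alpha> k else 0)"
    by (intro sum.cong refl) auto
  also have "\<dots> = \<alpha> m" using m by (simp add: sum.delta RR_def)
  finally show ?thesis .
qed


lemma cis_vd: "((\<lambda>\<theta>. cis (c * \<theta>)) has_vector_derivative (complex_of_real c * \<i> * cis (c * \<theta>))) (at \<theta> within S)"
proof -
  have "((\<lambda>\<theta>. cis (c * \<theta>)) has_derivative (\<lambda>t. (c * t) *\<^sub>R (\<i> * cis (c * \<theta>)))) (at \<theta> within S)"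
    by (intro has_derivative_cis derivative_intros)
  then show ?thesis unfolding has_vector_derivative_def
    by (rule has_derivative_eq_rhs) (auto simp: fun_eq_iff scaleR_conv_of_real)
qed

lemma cis_int_integral:
  "((\<lambda>\<theta>. cis (real_of_int k * \<theta>)) has_integral (if k = 0 then complex_of_real (2 * pi) else 0)) {0..2 * pi}"
proof (cases "k = 0")
  case True
  then show ?thesis using has_integral_const_real[of "1::complex" 0 "2*pi"] by (simp add: scaleR_conv_of_real)
next
  case False
  define c where "c = inverse (complex_of_real (real_of_int k) * \<i>)"
  have c: "complex_of_real (real_of_int k) * \<i> * c = 1" using False unfolding c_def by (simp add: field_simps)
  have "((\<lambda>\<theta>. cis (real_of_int k * \<theta>)) has_integral
      (cis (real_of_int k * (2 * pi)) * c - cis (real_of_int k * 0) * c)) {0..2 * pi}"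
  proof (rule fundamental_theorem_of_calculus)
    fix x :: real assume "x \<in> {0..2 * pi}"
    have d: "((\<lambda>\<theta>. cis (real_of_int k * \<theta>) * c) has_vector_derivative
        (complex_of_real (real_of_int k) * \<i> * cis (real_of_int k * x) * c)) (at x within {0..2 * pi})"
      by (intro has_vector_derivative_mult_left cis_vd)
    have e: "complex_of_real (real_of_int k) * \<i> * cis (real_of_int k * x) * c = cis (real_of_int k * x)"
      using c by (simp add: ac_simps)
    from d[unfolded e] show "((\<lambda>\<theta>. cis (real_of_int k * \<theta>) * c) has_vector_derivative cis (real_of_int k * x)) (at x within {0..2 * pi})" .
  qed simp
  moreover have "cis (real_of_int k * (2 * pi)) = 1"
    using cis_multiple_2pi[of "real_of_int k"] by (simp add: ac_simps)
  ultimately show ?thesis using False by simp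
qed

lemma fourier_coeff_0:
  assumes c: "coefs n f \<alpha>"
  shows "fourier_coeff f 0 = (if n = 0 then 0 else \<alpha> 0)"
proof -
  have fc: "f (cis \<theta>) = (\<Sum>k\<in>RR n. \<alpha> k * cis (real_of_int k * \<theta>))" for \<theta>
    using c unfolding coefs_def by (simp add: cis_power_int)
  have "((\<lambda>\<theta>. \<Sum>k\<in>RR n. \<alpha> k * cis (real_of_int k * \<theta>)) has_integral
        (\<Sum>k\<in>RR n. \<alpha> k * (if k = 0 then complex_of_real (2 * pi) else 0))) {0..2 * pi}"
    by (intro has_integral_sum has_integral_mult_right cis_int_integral) (simp add: RR_def)
  then have "integral {0..2 * pi} (\<lambda>\<theta>. f (cis \<theta>) * cis (- (real_of_int 0 * \<theta>))) =
        (\<Sum>k\<in>RR n. \<alpha> k * (if k = 0 then complex_of_real (2 * pi) else 0))"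
    using fc by (simp add: integral_unique)
  also have "\<dots> = (\<Sum>k\<in>RR n. if k = 0 then \<alpha> k * complex_of_real (2 * pi) else 0)"
    by (intro sum.cong refl) auto
  also have "\<dots> = (if n = 0 then 0 else \<alpha> 0 * complex_of_real (2 * pi))"
    by (simp add: sum.delta RR_def)
  finally show ?thesis unfolding fourier_coeff_def by simp
qed



lemma qf_congruence:
  "qf I A (\<lambda>l. \<Sum>y\<in>B. V l y * g y) = qf B (\<lambda>x y. \<Sum>k\<in>I. \<Sum>l\<in>I. cnj (V k x) * A k l * V l y) g"
proof -
  have "qf I A (\<lambda>l. \<Sum>y\<in>B. V l y * g y) =
      (\<Sum>k\<in>I. \<Sum>l\<in>I. \<Sum>x\<in>B. \<Sum>y\<in>B. cnj (g x) * (cnj (V k x) * A k l * V l y) * g y)"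
    unfolding qf_def by (simp add: sum_distrib_left sum_distrib_right ac_simps)
  also have "\<dots> = (\<Sum>k\<in>I. \<Sum>x\<in>B. \<Sum>l\<in>I. \<Sum>y\<in>B. cnj (g x) * (cnj (V k x) * A k l * V l y) * g y)"
    by (intro sum.cong refl) (rule sum.swap)
  also have "\<dots> = (\<Sum>x\<in>B. \<Sum>k\<in>I. \<Sum>l\<in>I. \<Sum>y\<in>B. cnj (g x) * (cnj (V k x) * A k l * V l y) * g y)"
    by (rule sum.swap)
  also have "\<dots> = (\<Sum>x\<in>B. \<Sum>k\<in>I. \<Sum>y\<in>B. \<Sum>l\<in>I. cnj (g x) * (cnj (V k x) * A k l * V l y) * g y)"
    by (intro sum.cong refl) (rule sum.swap)
  also have "\<dots> = (\<Sum>x\<in>B. \<Sum>y\<in>B. \<Sum>k\<in>I. \<Sum>l\<in>I. cnj (g x) * (cnj (V k x) * A k l * V l y) * g y)"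
    by (intro sum.cong refl) (rule sum.swap)
  also have "\<dots> = qf B (\<lambda>x y. \<Sum>k\<in>I. \<Sum>l\<in>I. cnj (V k x) * A k l * V l y) g"
    unfolding qf_def by (simp add: sum_distrib_left sum_distrib_right)
  finally show ?thesis .
qed

lemma qf_gram_sum:
  "(\<Sum>t<D. qf B K (g t)) = (\<Sum>x\<in>B. \<Sum>y\<in>B. (\<Sum>t<D. cnj (g t x) * g t y) * K x y)"
proof -
  have "(\<Sum>t<D. qf B K (g t)) = (\<Sum>t<D. \<Sum>x\<in>B. \<Sum>y\<in>B. cnj (g t x) * K x y * g t y)"
    unfolding qf_def ..
  also have "\<dots> = (\<Sum>x\<in>B. \<Sum>t<D. \<Sum>y\<in>B. cnj (g t x) * K x y * g t y)"
    by (rule sum.swap)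
  also have "\<dots> = (\<Sum>x\<in>B. \<Sum>y\<in>B. \<Sum>t<D. cnj (g t x) * K x y * g t y)"
    by (intro sum.cong refl) (rule sum.swap)
  also have "\<dots> = (\<Sum>x\<in>B. \<Sum>y\<in>B. (\<Sum>t<D. cnj (g t x) * g t y) * K x y)"
    unfolding sum_distrib_right by (intro sum.cong refl) (simp add: ac_simps)
  finally show ?thesis .
qed

lemma avg_trig:
  assumes "0 < L" "\<And>s. s \<in> S \<Longrightarrow> \<bar>e s\<bar> < int L"
  shows "avg L (\<lambda>z. \<Sum>s\<in>S. c s * z powi (e s)) = (\<Sum>s\<in>S. c s * (if e s = 0 then 1 else 0))"
  unfolding avg_sum avg_cmult using avg_powi[OF assms(1) assms(2)] by (intro sum.cong refl) auto

lemma cnj_powi_circle: "cmod z = 1 \<Longrightarrow> cnj (z powi m) = z powi (- m)"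
proof -
  assume z: "cmod z = 1"
  then have z0: "z \<noteq> 0" by auto
  have n1: "cmod (z powi m) = 1" using z by (simp add: norm_power_int)
  have "cnj (z powi m) * z powi m = 1"
    using n1 complex_norm_square[of "z powi m"] by (simp add: mult.commute)
  then have "z powi m * cnj (z powi m) = 1" by (simp add: mult.commute)
  then have "cnj (z powi m) = inverse (z powi m)"
    using inverse_unique by metis
  then show ?thesis by (simp add: power_int_minus)
qed

lemma counting:
  fixes F :: "int \<Rightarrow> complex"
  assumes supp: "\<And>m. m \<notin> RR n \<Longrightarrow> F m = 0"
  shows "(\<Sum>a<N. \<Sum>b<N. F (int a - int b)) = (\<Sum>m\<in>RR n. of_nat (N - nat \<bar>m\<bar>) * F m)"
proof (induction N)
  case 0 then show ?case by simp
next
  case (Suc N)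
  have fR: "finite (RR n)" unfolding RR_def by simp
  have A: "(\<Sum>a<Suc N. \<Sum>b<Suc N. F (int a - int b)) = (\<Sum>a<N. \<Sum>b<N. F (int a - int b))
      + ((\<Sum>a<N. F (int a - int N)) + (\<Sum>b<N. F (int N - int b)) + F 0)"
    by (simp add: sum.distrib)
  have n1: "(\<Sum>a<N. F (int a - int N)) = (\<Sum>m\<in>{-int N..-1}. F m)"
    by (rule sum.reindex_bij_witness[where i = "\<lambda>m. nat (m + int N)" and j = "\<lambda>a. int a - int N"]) auto
  have n2: "(\<Sum>b<N. F (int N - int b)) = (\<Sum>m\<in>{1..int N}. F m)"
    by (rule sum.reindex_bij_witness[where i = "\<lambda>m. nat (int N - m)" and j = "\<lambda>b. int N - int b"]) auto
  have split: "{-int N..int N} = {-int N..-1} \<union> ({0} \<union> {1..int N})" by auto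
  have n3: "(\<Sum>m\<in>{-int N..int N}. F m) = (\<Sum>m\<in>{-int N..-1}. F m) + (F 0 + (\<Sum>m\<in>{1..int N}. F m))"
    unfolding split by (subst sum.union_disjoint; auto)+
  have n4: "(\<Sum>m\<in>{-int N..int N}. F m) = (\<Sum>m\<in>RR n. if nat \<bar>m\<bar> \<le> N then F m else 0)"
  proof -
    have "(\<Sum>m\<in>{-int N..int N}. F m) = (\<Sum>m\<in>{-int N..int N} \<inter> RR n. F m)"
      by (rule sum.mono_neutral_right) (auto simp: supp)
    also have "\<dots> = (\<Sum>m\<in>RR n. if m \<in> {-int N..int N} then F m else 0)"
      by (simp add: sum.inter_restrict[OF fR] Int_commute)
    also have "\<dots> = (\<Sum>m\<in>RR n. if nat \<bar>m\<bar> \<le> N then F m else 0)"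
      by (intro sum.cong refl) auto
    finally show ?thesis .
  qed
  have B: "(\<Sum>m\<in>RR n. of_nat (Suc N - nat \<bar>m\<bar>) * F m) =
      (\<Sum>m\<in>RR n. of_nat (N - nat \<bar>m\<bar>) * F m) + (\<Sum>m\<in>RR n. if nat \<bar>m\<bar> \<le> N then F m else 0)"
    unfolding sum.distrib[symmetric]
    by (intro sum.cong refl) (auto simp: Suc_diff_le distrib_right)
  show ?case unfolding A B Suc.IH n4[symmetric] n3 n1 n2 by (simp add: ac_simps)
qed


lemma prod_sum: "(\<Sum>x\<in>A \<times> B. f x) = (\<Sum>i\<in>A. \<Sum>k\<in>B. f (i,k))"
  by (simp add: sum.cartesian_product split_def)

lemma swap4: "(\<Sum>a\<in>A. \<Sum>b\<in>B. \<Sum>k\<in>K. \<Sum>l\<in>L. h a b k l) = (\<Sum>k\<in>K. \<Sum>l\<in>L. \<Sum>a\<in>A. \<Sum>b\<in>B. h a b k l)"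
proof -
  have "(\<Sum>a\<in>A. \<Sum>b\<in>B. \<Sum>k\<in>K. \<Sum>l\<in>L. h a b k l) = (\<Sum>a\<in>A. \<Sum>k\<in>K. \<Sum>b\<in>B. \<Sum>l\<in>L. h a b k l)"
    by (intro sum.cong refl) (rule sum.swap)
  also have "\<dots> = (\<Sum>k\<in>K. \<Sum>a\<in>A. \<Sum>b\<in>B. \<Sum>l\<in>L. h a b k l)" by (rule sum.swap)
  also have "\<dots> = (\<Sum>k\<in>K. \<Sum>a\<in>A. \<Sum>l\<in>L. \<Sum>b\<in>B. h a b k l)"
    by (intro sum.cong refl) (rule sum.swap)
  also have "\<dots> = (\<Sum>k\<in>K. \<Sum>l\<in>L. \<Sum>a\<in>A. \<Sum>b\<in>B. h a b k l)"
    by (intro sum.cong refl) (rule sum.swap)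
  finally show ?thesis .
qed

lemma limit_arg:
  fixes Q R :: complex
  assumes "\<And>N. n \<le> N \<Longrightarrow> 0 \<le> of_nat N * Q - R"
  shows "0 \<le> Q"
proof -
  have h: "Re R \<le> real N * Re Q \<and> Im R = real N * Im Q" if "n \<le> N" for N
    using assms[OF that] by (simp add: less_eq_complex_def)
  have "Im Q = 0" using h[of n] h[of "Suc n"] by (simp add: algebra_simps)
  moreover have "Re Q \<ge> 0"
  proof (rule ccontr)
    assume neg: "\<not> Re Q \<ge> 0"
    then have "0 < - Re Q" by simp
    from ex_less_of_nat_mult[OF this, of "\<bar>Re R\<bar>"] obtain N0 :: nat where
      N0: "\<bar>Re R\<bar> < real N0 * (- Re Q)" by blast
    have "real N0 * (- Re Q) \<le> real (N0 + n) * (- Re Q)"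
      using neg by (intro mult_right_mono) auto
    then have "real (N0 + n) * Re Q < Re R" using N0 by (simp add: algebra_simps)
    with h[of "N0 + n"] show False by simp
  qed
  ultimately show ?thesis by (simp add: less_eq_complex_def)
qed

lemma avgK:
  assumes \<alpha>: "\<forall>k<q. \<forall>l<q. coefs n (G k l) (\<alpha> k l)" and a: "a < N" and b: "b < N"
  shows "avg (2 * N + 2 * n) (\<lambda>z. \<Sum>k<q. \<Sum>l<q. cnj (w (i,k) * z powi (- int a)) * G k l z * (w (j,l) * z powi (- int b)))
     = (\<Sum>k<q. \<Sum>l<q. cnj (w (i,k)) * w (j,l) * (if int b - int a \<in> RR n then \<alpha> k l (int b - int a) else 0))"
proof -
  let ?L = "2 * N + 2 * n"
  have "avg ?L (\<lambda>z. \<Sum>k<q. \<Sum>l<q. cnj (w (i,k) * z powi (- int a)) * G k l z * (w (j,l) * z powi (- int b)))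
     = avg ?L (\<lambda>z. \<Sum>k<q. \<Sum>l<q. \<Sum>s\<in>RR n. (cnj (w (i,k)) * w (j,l) * \<alpha> k l s) * z powi (int a + s - int b))"
  proof (rule avg_cong)
    fix z :: complex assume z: "cmod z = 1"
    then have z0: "z \<noteq> 0" by auto
    have pw: "z powi (int a + s - int b) = z powi (int a) * z powi s * inverse (z powi (int b))" for s
      using z0 by (simp add: power_int_add power_int_diff divide_inverse)
    have cz: "cnj (z powi (- int a)) = z powi (int a)" using cnj_powi_circle[OF z] by simp
    show "(\<Sum>k<q. \<Sum>l<q. cnj (w (i,k) * z powi (- int a)) * G k l z * (w (j,l) * z powi (- int b))) =
          (\<Sum>k<q. \<Sum>l<q. \<Sum>s\<in>RR n. (cnj (w (i,k)) * w (j,l) * \<alpha> k l s) * z powi (int a + s - int b))"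
    proof (intro sum.cong refl)
      fix k l assume k: "k \<in> {..<q}" and l: "l \<in> {..<q}"
      have Gz: "G k l z = (\<Sum>s\<in>RR n. \<alpha> k l s * z powi s)"
        using \<alpha> k l z unfolding coefs_def by auto
      show "cnj (w (i,k) * z powi (- int a)) * G k l z * (w (j,l) * z powi (- int b)) =
          (\<Sum>s\<in>RR n. (cnj (w (i,k)) * w (j,l) * \<alpha> k l s) * z powi (int a + s - int b))"
        unfolding Gz pw complex_cnj_mult cz
        by (simp add: sum_distrib_left sum_distrib_right power_int_minus ac_simps)
    qed
  qed
  also have "\<dots> = (\<Sum>k<q. \<Sum>l<q. \<Sum>s\<in>RR n. (cnj (w (i,k)) * w (j,l) * \<alpha> k l s) * (if int a + s - int b = 0 then 1 else 0))"
    unfolding avg_sum avg_cmult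
  proof (intro sum.cong refl arg_cong[where f = "\<lambda>x. _ * x"] avg_powi)
    show "0 < ?L" using a by simp
    fix k l s assume "s \<in> RR n"
    then show "\<bar>int a + s - int b\<bar> < int ?L" using a b unfolding RR_mem by auto
  qed
  also have "\<dots> = (\<Sum>k<q. \<Sum>l<q. cnj (w (i,k)) * w (j,l) * (if int b - int a \<in> RR n then \<alpha> k l (int b - int a) else 0))"
  proof (intro sum.cong refl)
    fix k l
    have "(\<Sum>s\<in>RR n. (cnj (w (i,k)) * w (j,l) * \<alpha> k l s) * (if int a + s - int b = 0 then 1 else 0))
        = (\<Sum>s\<in>RR n. if s = int b - int a then cnj (w (i,k)) * w (j,l) * \<alpha> k l s else 0)"
      by (intro sum.cong refl) auto
    also have "\<dots> = cnj (w (i,k)) * w (j,l) * (if int b - int a \<in> RR n then \<alpha> k l (int b - int a) else 0)"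
      by (simp add: sum.delta RR_def)
    finally show "(\<Sum>s\<in>RR n. (cnj (w (i,k)) * w (j,l) * \<alpha> k l s) * (if int a + s - int b = 0 then 1 else 0))
        = cnj (w (i,k)) * w (j,l) * (if int b - int a \<in> RR n then \<alpha> k l (int b - int a) else 0)" .
  qed
  finally show ?thesis .
qed



definition tau :: "(nat \<Rightarrow> nat \<Rightarrow> complex) \<Rightarrow> int \<Rightarrow> complex" where
  "tau A m = (if 0 \<le> m then A (nat m) 0 else A 0 (nat (- m)))"

definition phi :: "nat \<Rightarrow> (nat \<Rightarrow> nat \<Rightarrow> complex) \<Rightarrow> (complex \<Rightarrow> complex) \<Rightarrow> complex" where
  "phi n A = (\<lambda>f. if f \<in> trigpoly n then (\<Sum>m\<in>RR n. tau A m * coef n f (- m)) else 0)"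

lemma tau_toep:
  assumes "A \<in> toeplitz n" "k < n" "l < n"
  shows "tau A (int k - int l) = A k l"
proof -
  obtain \<sigma> where s: "\<forall>k l. A k l = (if k < n \<and> l < n then \<sigma> (int k - int l) else 0)"
    using assms(1) unfolding toeplitz_def by blast
  show ?thesis
  proof (cases "l \<le> k")
    case True
    then show ?thesis using s assms by (simp add: tau_def nat_diff_distrib' of_nat_diff less_imp_diff_less)
  next
    case False
    then show ?thesis using s assms by (simp add: tau_def nat_diff_distrib' of_nat_diff less_imp_diff_less)
  qed
qed

lemma RR_uminus: "- m \<in> RR n \<longleftrightarrow> m \<in> RR n"
  unfolding RR_def by auto

lemma dir1:
  assumes n1: "1 \<le> n" and X: "\<forall>i<p. \<forall>j<p. X i j \<in> toeplitz n" and PT: "pos_toep n p X"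
    and G: "\<forall>k<q. \<forall>l<q. G k l \<in> trigpoly n" and PG: "pos_trig q G"
  shows "psd ({..<p} \<times> {..<q}) (\<lambda>(i,k) (j,l). phi n (X i j) (G k l))"
proof (rule psdI)
  fix w :: "nat \<times> nat \<Rightarrow> complex"
  define \<tau> where "\<tau> i j m = tau (X i j) m" for i j m
  define \<alpha> where "\<alpha> k l = (SOME \<alpha>. coefs n (G k l) \<alpha>)" for k l
  have \<alpha>: "\<forall>k<q. \<forall>l<q. coefs n (G k l) (\<alpha> k l)"
  proof (intro allI impI)
    fix k l assume "k < q" "l < q"
    then have "\<exists>\<alpha>. coefs n (G k l) \<alpha>" using G trigpoly_coefs by auto
    then show "coefs n (G k l) (\<alpha> k l)" unfolding \<alpha>_def by (rule someI_ex)
  qed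
  define \<alpha>' where "\<alpha>' k l s = (if s \<in> RR n then \<alpha> k l s else 0)" for k l s
  define Z where "Z h = (\<Sum>i<p. \<Sum>j<p. \<Sum>k<q. \<Sum>l<q. cnj (w (i,k)) * w (j,l) * h i j k l)" for h
  define Hq where "Hq i j k l = (\<Sum>m\<in>RR n. \<tau> i j m * \<alpha> k l (- m))" for i j k l
  define Hr where "Hr i j k l = (\<Sum>m\<in>RR n. of_nat (nat \<bar>m\<bar>) * (\<tau> i j m * \<alpha> k l (- m)))" for i j k l
  define E where "E = (\<lambda>(i,k) (j,l). phi n (X i j) (G k l))"
  have Ent: "phi n (X i j) (G k l) = Hq i j k l" if "k < q" "l < q" for i j k l
  proof -
    have "G k l \<in> trigpoly n" using G that by auto
    then show ?thesis unfolding phi_def Hq_def \<tau>_def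
      using coef_eq[of n "G k l" "\<alpha> k l"] \<alpha> that RR_uminus by (auto intro!: sum.cong)
  qed
  have Qeq: "qf ({..<p} \<times> {..<q}) E w = Z Hq"
  proof -
    have "qf ({..<p} \<times> {..<q}) E w = (\<Sum>i<p. \<Sum>k<q. \<Sum>j<p. \<Sum>l<q. cnj (w (i,k)) * w (j,l) * Hq i j k l)"
      unfolding qf_def prod_sum E_def by (intro sum.cong refl) (auto simp: Ent ac_simps)
    also have "\<dots> = Z Hq" unfolding Z_def by (rule sum.cong[OF refl], rule sum.swap)
    finally show ?thesis .
  qed
  have key: "0 \<le> of_nat N * Z Hq - Z Hr" if N: "n \<le> N" for N
  proof -
    have P0: "psd ({..<p} \<times> {..<n}) (\<lambda>(i,k) (j,l). \<tau> i j (int k - int l))"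
      using PT unfolding pos_toep_def
      by (rule iffD1[OF psd_cong, rotated]) (auto simp: \<tau>_def intro!: tau_toep[symmetric] X[rule_format])
    obtain M where M: "psd ({..<p} \<times> {..<N}) M" and band: "\<forall>i<p. \<forall>j<p. \<forall>a<N. \<forall>b<N.
        \<bar>int a - int b\<bar> < int n \<longrightarrow> M (i,a) (j,b) = \<tau> i j (int a - int b)"
      using banded_ext[OF n1 P0 N] by blast
    define B where "B = {..<p} \<times> {..<N}"
    obtain D :: nat and g where g: "\<forall>x\<in>B. \<forall>y\<in>B. M x y = (\<Sum>t<D. cnj (g t x) * g t y)"
      using gram[OF _ M] unfolding B_def by auto
    define L where "L = 2 * N + 2 * n"
    define V where "V z l y = w (fst y, l) * z powi (- int (snd y))" for z l y
    define K where "K z x y = (\<Sum>k<q. \<Sum>l<q. cnj (V z k x) * G k l z * V z l y)" for z x y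
    define C where "C x y = (\<Sum>k<q. \<Sum>l<q. cnj (w (fst x, k)) * w (fst y, l) * \<alpha>' k l (int (snd y) - int (snd x)))" for x y
    have "0 \<le> (\<Sum>t<D. avg L (\<lambda>z. qf {..<q} (\<lambda>k l. G k l z) (\<lambda>l. \<Sum>y\<in>B. V z l y * g t y)))"
      using PG unfolding pos_trig_def by (intro sum_nonneg avg_nonneg) (auto simp: psd_iff)
    also have "\<dots> = avg L (\<lambda>z. \<Sum>t<D. qf B (K z) (g t))"
      unfolding avg_sum qf_congruence K_def ..
    also have "\<dots> = avg L (\<lambda>z. \<Sum>x\<in>B. \<Sum>y\<in>B. M x y * K z x y)"
      unfolding qf_gram_sum using g by (intro arg_cong[where f = "avg L"] ext sum.cong refl) auto
    also have "\<dots> = (\<Sum>x\<in>B. \<Sum>y\<in>B. M x y * avg L (\<lambda>z. K z x y))"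
      unfolding avg_sum avg_cmult ..
    also have "\<dots> = (\<Sum>x\<in>B. \<Sum>y\<in>B. M x y * C x y)"
    proof (intro sum.cong refl)
      fix x y assume x: "x \<in> B" and y: "y \<in> B"
      obtain i a where xa: "x = (i,a)" "a < N" using x unfolding B_def by auto
      obtain j b where yb: "y = (j,b)" "b < N" using y unfolding B_def by auto
      show "M x y * avg L (\<lambda>z. K z x y) = M x y * C x y"
        unfolding K_def V_def C_def L_def xa yb \<alpha>'_def
        using avgK[OF \<alpha> xa(2) yb(2), of w i j] by (simp cong: if_cong)
    qed
    also have "\<dots> = (\<Sum>x\<in>B. \<Sum>y\<in>B. \<tau> (fst x) (fst y) (int (snd x) - int (snd y)) * C x y)"
    proof (intro sum.cong refl)
      fix x y assume x: "x \<in> B" and y: "y \<in> B"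
      obtain i a where xa: "x = (i,a)" "a < N" "i < p" using x unfolding B_def by auto
      obtain j b where yb: "y = (j,b)" "b < N" "j < p" using y unfolding B_def by auto
      show "M x y * C x y = \<tau> (fst x) (fst y) (int (snd x) - int (snd y)) * C x y"
      proof (cases "int b - int a \<in> RR n")
        case True
        then have "\<bar>int a - int b\<bar> < int n" unfolding RR_mem by auto
        then show ?thesis using band xa yb by auto
      next
        case False
        then have "C x y = 0" unfolding C_def \<alpha>'_def xa yb by simp
        then show ?thesis by simp
      qed
    qed
    also have "\<dots> = Z (\<lambda>i j k l. \<Sum>a<N. \<Sum>b<N. \<tau> i j (int a - int b) * \<alpha>' k l (int b - int a))"
    proof -
      have "(\<Sum>x\<in>B. \<Sum>y\<in>B. \<tau> (fst x) (fst y) (int (snd x) - int (snd y)) * C x y)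
         = (\<Sum>i<p. \<Sum>a<N. \<Sum>j<p. \<Sum>b<N. \<Sum>k<q. \<Sum>l<q. cnj (w (i, k)) * w (j, l) *
              (\<tau> i j (int a - int b) * \<alpha>' k l (int b - int a)))"
        unfolding B_def prod_sum C_def by (simp add: sum_distrib_left ac_simps)
      also have "\<dots> = (\<Sum>i<p. \<Sum>j<p. \<Sum>a<N. \<Sum>b<N. \<Sum>k<q. \<Sum>l<q. cnj (w (i, k)) * w (j, l) *
              (\<tau> i j (int a - int b) * \<alpha>' k l (int b - int a)))"
        by (rule sum.cong[OF refl], rule sum.swap)
      also have "\<dots> = (\<Sum>i<p. \<Sum>j<p. \<Sum>k<q. \<Sum>l<q. \<Sum>a<N. \<Sum>b<N. cnj (w (i, k)) * w (j, l) *
              (\<tau> i j (int a - int b) * \<alpha>' k l (int b - int a)))"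
        by (rule sum.cong[OF refl], rule sum.cong[OF refl], rule swap4)
      also have "\<dots> = Z (\<lambda>i j k l. \<Sum>a<N. \<Sum>b<N. \<tau> i j (int a - int b) * \<alpha>' k l (int b - int a))"
        unfolding Z_def by (simp add: sum_distrib_left)
      finally show ?thesis .
    qed
    also have "\<dots> = Z (\<lambda>i j k l. of_nat N * Hq i j k l - Hr i j k l)"
    proof -
      have "(\<Sum>a<N. \<Sum>b<N. \<tau> i j (int a - int b) * \<alpha>' k l (int b - int a)) = of_nat N * Hq i j k l - Hr i j k l"
        for i j k l
      proof -
        have "(\<Sum>a<N. \<Sum>b<N. \<tau> i j (int a - int b) * \<alpha>' k l (int b - int a))
            = (\<Sum>a<N. \<Sum>b<N. (\<lambda>m. \<tau> i j m * \<alpha>' k l (- m)) (int a - int b))" by simp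
        also have "\<dots> = (\<Sum>m\<in>RR n. of_nat (N - nat \<bar>m\<bar>) * (\<tau> i j m * \<alpha>' k l (- m)))"
          by (rule counting) (simp add: \<alpha>'_def RR_uminus)
        also have "\<dots> = (\<Sum>m\<in>RR n. of_nat N * (\<tau> i j m * \<alpha> k l (- m)) - of_nat (nat \<bar>m\<bar>) * (\<tau> i j m * \<alpha> k l (- m)))"
        proof (intro sum.cong refl)
          fix m assume m: "m \<in> RR n"
          then have "nat \<bar>m\<bar> \<le> N" using N unfolding RR_mem by auto
          then show "of_nat (N - nat \<bar>m\<bar>) * (\<tau> i j m * \<alpha>' k l (- m)) = of_nat N * (\<tau> i j m * \<alpha> k l (- m)) - of_nat (nat \<bar>m\<bar>) * (\<tau> i j m * \<alpha> k l (- m))"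
            using m by (simp add: \<alpha>'_def RR_uminus of_nat_diff left_diff_distrib)
        qed
        also have "\<dots> = of_nat N * Hq i j k l - Hr i j k l"
          unfolding Hq_def Hr_def by (simp add: sum_subtractf sum_distrib_left)
        finally show ?thesis .
      qed
      then show ?thesis by simp
    qed
    also have "\<dots> = of_nat N * Z Hq - Z Hr"
      unfolding Z_def by (simp add: sum_subtractf sum_distrib_left right_diff_distrib ac_simps)
    finally show ?thesis .
  qed
  have "0 \<le> Z Hq" by (rule limit_arg[of n]) (rule key)
  then show "0 \<le> qf ({..<p} \<times> {..<q}) (\<lambda>(i,k) (j,l). phi n (X i j) (G k l)) w"
    using Qeq unfolding E_def by simp
qed



lemma finite_RR [simp]: "finite (RR n)" unfolding RR_def by simp

definition ez :: "int \<Rightarrow> complex \<Rightarrow> complex" where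
  "ez j = (\<lambda>z. if cmod z = 1 then z powi j else 0)"

lemma coefs_ez: "j \<in> RR n \<Longrightarrow> coefs n (ez j) (\<lambda>k. if k = j then 1 else 0)"
  unfolding coefs_def ez_def by (simp add: if_distrib[of "\<lambda>x. x * _"] sum.delta cong: if_cong)

lemma ez_trig: "j \<in> RR n \<Longrightarrow> ez j \<in> trigpoly n"
  using coefs_ez trigpoly_coefs by blast

lemma phi_ez:
  assumes "j \<in> RR n" shows "phi n A (ez j) = tau A (- j)"
proof -
  have "phi n A (ez j) = (\<Sum>m\<in>RR n. tau A m * (if - m = j then 1 else 0))"
    unfolding phi_def using ez_trig[OF assms] coef_eq[OF coefs_ez[OF assms]] RR_uminus
    by (auto intro!: sum.cong)
  also have "\<dots> = (\<Sum>m\<in>RR n. if m = - j then tau A m else 0)"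
    by (intro sum.cong refl) auto
  also have "\<dots> = tau A (- j)" using assms RR_uminus[of j n] by (simp add: sum.delta)
  finally show ?thesis .
qed

lemma powi_circle_diff: "cmod z = 1 \<Longrightarrow> z powi (int l - int k) = cnj (z powi int k) * z powi int l"
proof -
  assume z: "cmod z = 1"
  then have z0: "z \<noteq> 0" by auto
  have "z powi (int l - int k) = z powi (- int k + int l)" by (simp add: algebra_simps)
  also have "\<dots> = z powi (- int k) * z powi int l" by (rule power_int_add) (simp add: z0)
  finally have "z powi (int l - int k) = z powi (- int k) * z powi int l" .
  then show ?thesis using cnj_powi_circle[OF z, of "int k"] by simp
qed

lemma dir2:
  assumes X: "\<forall>i<p. \<forall>j<p. X i j \<in> toeplitz n" and PD: "pos_dual n p (\<lambda>i j. phi n (X i j))"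
  shows "pos_toep n p X"
proof -
  define G where "G k l = ez (int l - int k)" for k l
  have RRd: "int l - int k \<in> RR n" if "k < n" "l < n" for k l using that unfolding RR_mem by auto
  have GT: "\<forall>k<n. \<forall>l<n. G k l \<in> trigpoly n" unfolding G_def using RRd ez_trig by auto
  have PG: "pos_trig n G" unfolding pos_trig_def
  proof (intro allI impI)
    fix z :: complex assume z: "cmod z = 1"
    have "psd {..<n} (\<lambda>k l. 1 * (cnj (z powi int k) * z powi int l))" by (rule psd_rank1) (simp add: less_eq_complex_def)
    then show "psd {..<n} (\<lambda>k l. G k l z)"
      by (rule iffD1[OF psd_cong, rotated]) (simp add: G_def ez_def z powi_circle_diff)
  qed
  have "psd ({..<p} \<times> {..<n}) (\<lambda>(i,k) (j,l). phi n (X i j) (G k l))"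
    using PD GT PG unfolding pos_dual_def by blast
  then show ?thesis unfolding pos_toep_def
    by (rule iffD1[OF psd_cong, rotated])
       (auto simp: G_def phi_ez RRd intro!: tau_toep X[rule_format])
qed

lemma psd_zero: "psd I (\<lambda>a b. 0)"
  by (simp add: psd_iff qf_def)

lemma RR_0: "RR 0 = {}" unfolding RR_def by simp

lemma phi_0: "phi 0 A f = 0"
  unfolding phi_def RR_0 by simp

lemma coefs_lin:
  assumes f: "coefs n f \<alpha>" and g: "coefs n g \<beta>"
  shows "coefs n (\<lambda>z. a * f z + b * g z) (\<lambda>k. a * \<alpha> k + b * \<beta> k)"
  unfolding coefs_def
proof
  fix z :: complex
  have "(\<Sum>k\<in>RR n. (a * \<alpha> k + b * \<beta> k) * z powi k) = (\<Sum>k\<in>RR n. a * (\<alpha> k * z powi k) + b * (\<beta> k * z powi k))"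
    by (intro sum.cong refl) (simp add: algebra_simps)
  also have "\<dots> = a * (\<Sum>k\<in>RR n. \<alpha> k * z powi k) + b * (\<Sum>k\<in>RR n. \<beta> k * z powi k)"
    by (simp add: sum.distrib sum_distrib_left)
  finally show "a * f z + b * g z = (if cmod z = 1 then \<Sum>k\<in>RR n. (a * \<alpha> k + b * \<beta> k) * z powi k else 0)"
    using f g unfolding coefs_def by simp
qed

lemma trig_lin: "f \<in> trigpoly n \<Longrightarrow> g \<in> trigpoly n \<Longrightarrow> (\<lambda>z. a * f z + b * g z) \<in> trigpoly n"
  unfolding trigpoly_coefs using coefs_lin by blast

lemma avg_lin: "avg L (\<lambda>z. a * F z + b * H z) = a * avg L F + b * avg L H"
  unfolding avg_def by (simp add: sum.distrib sum_distrib_left add_divide_distrib)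

lemma coef_lin: "coef n (\<lambda>z. a * f z + b * g z) m = a * coef n f m + b * coef n g m"
proof -
  have "coef n (\<lambda>z. a * f z + b * g z) m = avg (2 * n) (\<lambda>z. a * (f z * z powi - m) + b * (g z * z powi - m))"
    unfolding coef_def by (simp add: algebra_simps)
  then show ?thesis unfolding avg_lin coef_def .
qed

lemma phi_dual: "phi n A \<in> trig_dual n"
  unfolding trig_dual_def
proof (intro CollectI conjI ballI allI impI)
  fix f g a b assume f: "f \<in> trigpoly n" and g: "g \<in> trigpoly n"
  show "phi n A (\<lambda>z. a * f z + b * g z) = a * phi n A f + b * phi n A g"
    using f g trig_lin[OF f g]
    by (simp add: phi_def coef_lin sum.distrib sum_distrib_left distrib_left ac_simps)
next
  fix f assume "f \<notin> trigpoly n"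
  then show "phi n A f = 0" by (simp add: phi_def)
qed

lemma tau_lin: "tau (\<lambda>k l. a * A k l + b * B k l) m = a * tau A m + b * tau B m"
  by (simp add: tau_def)

lemma phi_lin: "phi n (\<lambda>k l. a * A k l + b * B k l) = (\<lambda>f. a * phi n A f + b * phi n B f)"
  by (rule ext) (simp add: phi_def tau_lin sum.distrib sum_distrib_left algebra_simps)

lemma phi_unital: "phi n (id_mat n) = fourier_state n"
proof (rule ext)
  fix f
  show "phi n (id_mat n) f = fourier_state n f"
  proof (cases "f \<in> trigpoly n")
    case False then show ?thesis by (simp add: phi_def fourier_state_def)
  next
    case True
    then obtain \<alpha> where a: "coefs n f \<alpha>" using trigpoly_coefs by blast
    show ?thesis
    proof (cases "n = 0")
      case True
      then show ?thesis using a fourier_coeff_0[OF a] by (simp add: phi_0 fourier_state_def \<open>f \<in> trigpoly n\<close>)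
    next
      case False
      have t: "tau (id_mat n) m = (if m = 0 then 1 else 0)" if "m \<in> RR n" for m
        using False that by (auto simp: tau_def id_mat_def RR_mem)
      have "phi n (id_mat n) f = (\<Sum>m\<in>RR n. tau (id_mat n) m * coef n f (- m))"
        unfolding phi_def using True by simp
      also have "\<dots> = (\<Sum>m\<in>RR n. if m = 0 then coef n f (- m) else 0)"
        by (intro sum.cong refl) (simp add: t)
      also have "\<dots> = coef n f 0" using False by (simp add: sum.delta RR_def)
      also have "\<dots> = \<alpha> 0" using coef_eq[OF a] False by (simp add: RR_def)
      finally show ?thesis using fourier_coeff_0[OF a] False True by (simp add: fourier_state_def)
    qed
  qed
qed

lemma dual_zero: "\<psi> \<in> trig_dual n \<Longrightarrow> \<psi> (\<lambda>z. 0) = 0"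
proof -
  assume "\<psi> \<in> trig_dual n"
  moreover have z: "(\<lambda>z. 0) \<in> trigpoly n" unfolding trigpoly_coefs coefs_def
    by (intro CollectI exI[of _ "\<lambda>k. 0"]) simp
  ultimately have L: "\<forall>f\<in>trigpoly n. \<forall>g\<in>trigpoly n. \<forall>a b. \<psi> (\<lambda>z. a * f z + b * g z) = a * \<psi> f + b * \<psi> g"
    unfolding trig_dual_def by blast
  have "\<psi> (\<lambda>z. 0 * 0 + 0 * 0) = 0 * \<psi> (\<lambda>z. 0) + 0 * \<psi> (\<lambda>z. 0)"
    using L[rule_format, OF z z, of 0 0] by simp
  then show ?thesis by simp
qed

lemma dual_sum:
  assumes psi: "\<psi> \<in> trig_dual n" and fin: "finite S"
  shows "(\<forall>x\<in>S. h x \<in> trigpoly n) \<Longrightarrow> (\<lambda>z. \<Sum>x\<in>S. c x * h x z) \<in> trigpoly n \<and>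
      \<psi> (\<lambda>z. \<Sum>x\<in>S. c x * h x z) = (\<Sum>x\<in>S. c x * \<psi> (h x))"
  using fin
proof (induction S rule: finite_induct)
  case empty
  have z: "(\<lambda>z. 0) \<in> trigpoly n" unfolding trigpoly_coefs coefs_def
    by (intro CollectI exI[of _ "\<lambda>k. 0"]) simp
  then show ?case using dual_zero[OF psi] by simp
next
  case (insert x S)
  have IH: "(\<lambda>z. \<Sum>x\<in>S. c x * h x z) \<in> trigpoly n" "\<psi> (\<lambda>z. \<Sum>x\<in>S. c x * h x z) = (\<Sum>x\<in>S. c x * \<psi> (h x))"
    using insert by auto
  have hx: "h x \<in> trigpoly n" using insert by auto
  have lin: "\<psi> (\<lambda>z. c x * h x z + 1 * (\<Sum>x\<in>S. c x * h x z)) = c x * \<psi> (h x) + 1 * \<psi> (\<lambda>z. \<Sum>x\<in>S. c x * h x z)"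
  proof -
    have L: "\<forall>f\<in>trigpoly n. \<forall>g\<in>trigpoly n. \<forall>a b. \<psi> (\<lambda>z. a * f z + b * g z) = a * \<psi> f + b * \<psi> g"
      using psi unfolding trig_dual_def by blast
    show ?thesis using L[rule_format, OF hx IH(1), of "c x" 1] by simp
  qed
  have tr: "(\<lambda>z. c x * h x z + 1 * (\<Sum>x\<in>S. c x * h x z)) \<in> trigpoly n"
    by (rule trig_lin[OF hx IH(1)])
  show ?case using lin tr IH(2) insert(1,2) by simp
qed

lemma toep_out: "A \<in> toeplitz n \<Longrightarrow> \<not> (k < n \<and> l < n) \<Longrightarrow> A k l = 0"
  unfolding toeplitz_def by auto

lemma phi_bij: "bij_betw (phi n) (toeplitz n) (trig_dual n)"
proof (rule bij_betw_imageI)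
  show "inj_on (phi n) (toeplitz n)"
  proof (rule inj_onI)
    fix A B assume A: "A \<in> toeplitz n" and B: "B \<in> toeplitz n" and e: "phi n A = phi n B"
    show "A = B"
    proof (intro ext)
      fix k l
      show "A k l = B k l"
      proof (cases "k < n \<and> l < n")
        case True
        then have r: "int l - int k \<in> RR n" unfolding RR_mem by auto
        have "A k l = phi n A (ez (int l - int k))" using phi_ez[OF r] tau_toep[OF A] True by simp
        also have "\<dots> = phi n B (ez (int l - int k))" using e by simp
        also have "\<dots> = B k l" using phi_ez[OF r] tau_toep[OF B] True by simp
        finally show ?thesis .
      next
        case False then show ?thesis using toep_out[OF A False] toep_out[OF B False] by simp
      qed
    qed
  qed
  show "phi n ` toeplitz n = trig_dual n"
  proof
    show "phi n ` toeplitz n \<subseteq> trig_dual n" using phi_dual by auto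
    show "trig_dual n \<subseteq> phi n ` toeplitz n"
    proof
      fix \<psi> assume psi: "\<psi> \<in> trig_dual n"
      define A where "A = (\<lambda>k l. if k < n \<and> l < n then \<psi> (ez (- (int k - int l))) else 0)"
      have At: "A \<in> toeplitz n" unfolding toeplitz_def A_def by (intro CollectI exI[of _ "\<lambda>m. \<psi> (ez (- m))"]) simp
      have tA: "tau A m = \<psi> (ez (- m))" if "m \<in> RR n" for m
        using that unfolding tau_def A_def RR_mem by auto
      have "\<psi> = phi n A"
      proof
        fix f
        show "\<psi> f = phi n A f"
        proof (cases "f \<in> trigpoly n")
          case False
          then show ?thesis using psi by (simp add: trig_dual_def phi_def)
        next
          case True
          then obtain \<alpha> where a: "coefs n f \<alpha>" using trigpoly_coefs by blast
          have fe: "f = (\<lambda>z. \<Sum>j\<in>RR n. \<alpha> j * ez j z)"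
            using a unfolding coefs_def ez_def by (auto simp: fun_eq_iff if_distrib[of "\<lambda>x. _ * x"] cong: if_cong)
          have "phi n A f = (\<Sum>m\<in>RR n. \<psi> (ez (- m)) * \<alpha> (- m))"
            unfolding phi_def using True tA coef_eq[OF a] RR_uminus by (auto intro!: sum.cong)
          also have "\<dots> = (\<Sum>j\<in>RR n. \<alpha> j * \<psi> (ez j))"
            by (rule sum.reindex_bij_witness[where i = uminus and j = uminus]) (auto simp: RR_uminus mult.commute)
          also have "\<dots> = \<psi> (\<lambda>z. \<Sum>j\<in>RR n. \<alpha> j * ez j z)"
            using dual_sum[OF psi, of "RR n" ez \<alpha>] ez_trig by (auto simp: RR_def)
          also have "\<dots> = \<psi> f" using fe by simp
          finally show ?thesis by simp
        qed
      qed
      then show "\<psi> \<in> phi n ` toeplitz n" using At by blast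
    qed
  qed
qed

theorem theorem3p1:
  fixes n :: nat
  shows "\<exists>\<phi>. unital_coi n \<phi>"
proof (intro exI[of _ "phi n"])
  show "unital_coi n (phi n)"
    unfolding unital_coi_def
  proof (intro conjI ballI allI impI)
    show "bij_betw (phi n) (toeplitz n) (trig_dual n)" by (rule phi_bij)
    show "phi n (id_mat n) = fourier_state n" by (rule phi_unital)
    fix A B a b
    show "phi n (\<lambda>k l. a * A k l + b * B k l) = (\<lambda>f. a * phi n A f + b * phi n B f)"
      by (rule phi_lin)
  next
    fix p :: nat and X :: "nat \<Rightarrow> nat \<Rightarrow> nat \<Rightarrow> nat \<Rightarrow> complex" assume X: "\<forall>i<p. \<forall>j<p. X i j \<in> toeplitz n"
    show "pos_toep n p X = pos_dual n p (\<lambda>i j. phi n (X i j))"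
    proof
      assume PT: "pos_toep n p X"
      show "pos_dual n p (\<lambda>i j. phi n (X i j))"
        unfolding pos_dual_def
      proof (intro allI impI)
        fix q G assume G: "\<forall>k<q. \<forall>l<q. G k l \<in> trigpoly n" and PG: "pos_trig q G"
        show "psd ({..<p} \<times> {..<q}) (\<lambda>(i,k) (j,l). phi n (X i j) (G k l))"
        proof (cases "n = 0")
          case True
          show ?thesis using psd_zero by (rule iffD1[OF psd_cong, rotated]) (auto simp: True phi_0)
        next
          case False
          then show ?thesis using dir1[OF _ X PT G PG] by simp
        qed
      qed
    next
      assume "pos_dual n p (\<lambda>i j. phi n (X i j))"
      then show "pos_toep n p X" by (rule dir2[OF X])
    qed
  qed
qed


end
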